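(* Let $A$ be a uniform algebra on a compact space $X$, let $x_0\in X$, and let $\phi$ be a selfmap of $X$ which induces an endomorphism $T$ of $A$ (i.e. $f\circ\phi\in A$ and $Tf=f\circ\phi$ for all $f\in A$). Let $\phi_n$ be the $n$-th iterate of $\phi$ and set $C_n=\sup\{\|\phi_n(x)-x_0\|: x\in X\}$. If $C_n^{1/n}\to0$ as $n\to\infty$, then $T$ is a Riesz operator.
   Context: A uniform algebra on a compact space $X$ is a closed subalgebra of $C(X)$, with the supremum norm, containing the constants and separating points. For $x,y\in X$, the norm (Gleason) distance is $\|x-y\|=\sup\{|f(x)-f(y)|: f\in A,\ \|f\|_\infty\le1\}$, i.e. the norm in $A^*$ of the difference of the evaluation functionals. A bounded operator $T$ is a Riesz operator if $\lim_{n}\left[\inf\{\|T^n-K\|:K \text{ compact}\}\right]^{1/n}=0$. *)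

theory Defs
  imports "HOL-Analysis.Analysis"
begin

text \<open>Functions are complex-valued functions on the ambient type; only their values on the
compact set X matter. A uniform algebra A is represented extensionally: it contains every
function agreeing on X with one of its members (so A is really a set of elements of C(X)).\<close>

definition supn :: "'a set \<Rightarrow> ('a \<Rightarrow> complex) \<Rightarrow> real" where
  "supn X f = Sup ((\<lambda>x. cmod (f x)) ` X)"

definition uniform_algebra :: "'a::topological_space set \<Rightarrow> ('a \<Rightarrow> complex) set \<Rightarrow> bool" where
  "uniform_algebra X A \<longleftrightarrow>
     compact X \<and>
     (\<forall>f\<in>A. continuous_on X f) \<and>
     (\<forall>f\<in>A. \<forall>g. (\<forall>x\<in>X. g x = f x) \<longrightarrow> g \<in> A) \<and>
     (\<forall>c. (\<lambda>_. c) \<in> A) \<and>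
     (\<forall>f\<in>A. \<forall>g\<in>A. (\<lambda>x. f x + g x) \<in> A) \<and>
     (\<forall>f\<in>A. \<forall>g\<in>A. (\<lambda>x. f x * g x) \<in> A) \<and>
     (\<forall>F g. (\<forall>n. F n \<in> A) \<and> continuous_on X g \<and> uniform_limit X F g sequentially \<longrightarrow> g \<in> A) \<and>
     (\<forall>x\<in>X. \<forall>y\<in>X. x \<noteq> y \<longrightarrow> (\<exists>f\<in>A. f x \<noteq> f y))"

definition gdist :: "'a set \<Rightarrow> ('a \<Rightarrow> complex) set \<Rightarrow> 'a \<Rightarrow> 'a \<Rightarrow> real" where
  "gdist X A x y = Sup {cmod (f x - f y) | f. f \<in> A \<and> supn X f \<le> 1}"

definition compact_operator_on :: "'a set \<Rightarrow> ('a \<Rightarrow> complex) set \<Rightarrow> (('a \<Rightarrow> complex) \<Rightarrow> ('a \<Rightarrow> complex)) \<Rightarrow> bool" where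
  "compact_operator_on X A K \<longleftrightarrow>
     (\<forall>f\<in>A. K f \<in> A) \<and>
     (\<forall>f\<in>A. \<forall>g\<in>A. (\<forall>x\<in>X. f x = g x) \<longrightarrow> (\<forall>x\<in>X. K f x = K g x)) \<and>
     (\<forall>f\<in>A. \<forall>g\<in>A. \<forall>c. \<forall>x\<in>X. K (\<lambda>y. f y + c * g y) x = K f x + c * K g x) \<and>
     (\<forall>F. (\<forall>n. F n \<in> A \<and> supn X (F n) \<le> 1) \<longrightarrow>
          (\<exists>r::nat\<Rightarrow>nat. strict_mono r \<and> uniformly_Cauchy_on X (\<lambda>n. K (F (r n)))))"

definition opnorm :: "'a set \<Rightarrow> ('a \<Rightarrow> complex) set \<Rightarrow> (('a \<Rightarrow> complex) \<Rightarrow> ('a \<Rightarrow> complex)) \<Rightarrow> real" where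
  "opnorm X A S = Sup {supn X (S f) | f. f \<in> A \<and> supn X f \<le> 1}"

definition ess_norm :: "'a set \<Rightarrow> ('a \<Rightarrow> complex) set \<Rightarrow> (('a \<Rightarrow> complex) \<Rightarrow> ('a \<Rightarrow> complex)) \<Rightarrow> real" where
  "ess_norm X A S = Inf {opnorm X A (\<lambda>f x. S f x - K f x) | K. compact_operator_on X A K}"

definition riesz_op :: "'a set \<Rightarrow> ('a \<Rightarrow> complex) set \<Rightarrow> (('a \<Rightarrow> complex) \<Rightarrow> ('a \<Rightarrow> complex)) \<Rightarrow> bool" where
  "riesz_op X A T \<longleftrightarrow> (\<lambda>n. ess_norm X A (T ^^ n) powr (1 / real n)) \<longlonglongrightarrow> 0"

end

theory Submission
  imports Defs
begin

lemma cont_bdd: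
  fixes f :: "'a::topological_space \<Rightarrow> complex"
  assumes "compact X" "continuous_on X f"
  shows "bdd_above ((\<lambda>x. cmod (f x)) ` X)"
proof -
  have "compact (f ` X)" by (rule compact_continuous_image[OF assms(2,1)])
  then have "bounded (f ` X)" by (rule compact_imp_bounded)
  then obtain B where B: "\<forall>y\<in>f ` X. norm y \<le> B" unfolding bounded_iff by blast
  show ?thesis by (rule bdd_aboveI2[where M=B]) (use B in simp)
qed

lemma supn_le:
  assumes "X \<noteq> {}" "\<And>x. x \<in> X \<Longrightarrow> cmod (f x) \<le> B"
  shows "supn X f \<le> B"
  unfolding supn_def using assms by (intro cSup_least) auto

lemma supn_ge:
  assumes "x \<in> X" "bdd_above ((\<lambda>x. cmod (f x)) ` X)"
  shows "cmod (f x) \<le> supn X f"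
  unfolding supn_def using assms by (intro cSup_upper) auto

lemma UA_compact: "uniform_algebra X A \<Longrightarrow> compact X"
  unfolding uniform_algebra_def by (rule conjunct1)

lemma UA_cont: "uniform_algebra X A \<Longrightarrow> f \<in> A \<Longrightarrow> continuous_on X f"
  unfolding uniform_algebra_def by (drule conjunct1[OF conjunct2]) (erule bspec)

lemma UA_const: "uniform_algebra X A \<Longrightarrow> (\<lambda>_. c) \<in> A"
  unfolding uniform_algebra_def by (drule conjunct1[OF conjunct2[OF conjunct2[OF conjunct2]]]) (erule spec)

lemma UA_bdd:
  assumes "uniform_algebra X A" "f \<in> A"
  shows "bdd_above ((\<lambda>x. cmod (f x)) ` X)"
  using cont_bdd[OF UA_compact[OF assms(1)] UA_cont[OF assms]] .

lemma UA_ge: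
  assumes "uniform_algebra X A" "f \<in> A" "x \<in> X"
  shows "cmod (f x) \<le> supn X f"
  by (rule supn_ge[OF assms(3) UA_bdd[OF assms(1,2)]])

lemma compact_op_bdd:
  assumes UA: "uniform_algebra X A" and ne: "X \<noteq> {}" and K: "compact_operator_on X A K"
  shows "\<exists>M. \<forall>f\<in>A. supn X f \<le> 1 \<longrightarrow> supn X (K f) \<le> M"
proof (rule ccontr)
  assume "\<not> ?thesis"
  then have "\<forall>n::nat. \<exists>f. f \<in> A \<and> supn X f \<le> 1 \<and> supn X (K f) > real n"
    by (meson not_le)
  then obtain F where F: "\<And>n. F n \<in> A \<and> supn X (F n) \<le> 1 \<and> supn X (K (F n)) > real n"
    by metis
  then obtain r where r: "strict_mono r" and uc: "uniformly_Cauchy_on X (\<lambda>n. K (F (r n)))"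
    using K unfolding compact_operator_on_def by blast
  obtain N where N: "\<forall>x\<in>X. \<forall>m\<ge>N. \<forall>n\<ge>N. dist (K (F (r m)) x) (K (F (r n)) x) < 1"
    using uc unfolding uniformly_Cauchy_on_def by (meson zero_less_one)
  define B where "B = supn X (K (F (r N))) + 1"
  have KA: "\<And>n. K (F n) \<in> A" using K F unfolding compact_operator_on_def by blast
  have bnd: "supn X (K (F (r m))) \<le> B" if "m \<ge> N" for m
  proof (rule supn_le[OF ne])
    fix x assume x: "x \<in> X"
    have "dist (K (F (r m)) x) (K (F (r N)) x) < 1" using N x that by blast
    then have "cmod (K (F (r m)) x) < cmod (K (F (r N)) x) + 1"
      by (metis dist_norm norm_triangle_sub add.commute add_less_cancel_left order_le_less_trans norm_minus_commute)
    moreover have "cmod (K (F (r N)) x) \<le> supn X (K (F (r N)))" using UA_ge[OF UA KA x] .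
    ultimately show "cmod (K (F (r m)) x) \<le> B" unfolding B_def by linarith
  qed
  define m where "m = max N (nat (ceiling B))"
  have "supn X (K (F (r m))) \<le> B" using bnd m_def by simp
  moreover have "supn X (K (F (r m))) > real (r m)" using F by blast
  moreover have "r m \<ge> m" using r seq_suble by blast
  moreover have "real m \<ge> B" unfolding m_def by linarith
  ultimately have "real m < B" by linarith
  with \<open>real m \<ge> B\<close> show False by linarith
qed

theorem lemma4p1:
  fixes X :: "'a::topological_space set" and A :: "('a \<Rightarrow> complex) set"
    and \<phi> :: "'a \<Rightarrow> 'a" and x0 :: 'a
  assumes "uniform_algebra X A"
    and "x0 \<in> X"
    and "\<forall>x\<in>X. \<phi> x \<in> X"
    and "\<forall>f\<in>A. f \<circ> \<phi> \<in> A"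
    and "(\<lambda>n. Sup ((\<lambda>x. gdist X A ((\<phi> ^^ n) x) x0) ` X) powr (1 / real n)) \<longlonglongrightarrow> 0"
  shows "riesz_op X A (\<lambda>f. f \<circ> \<phi>)"
proof -
  note UA = assms(1)
  have ne: "X \<noteq> {}" using assms(2) by blast
  have constA: "\<And>c. (\<lambda>_. c) \<in> A" using UA by (rule UA_const)
  have sup0: "supn X (\<lambda>_. 0) \<le> 1" by (rule order_trans[OF supn_le[OF ne, of _ 0]]) auto
  define T where "T = (\<lambda>f::'a \<Rightarrow> complex. f \<circ> \<phi>)"
  have Tpow: "(T ^^ n) f = f \<circ> (\<phi> ^^ n)" for n f
    by (induction n) (auto simp: T_def funpow_swap1)
  have phiX: "(\<phi> ^^ n) x \<in> X" if "x \<in> X" for n x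
    using that assms(3) by (induction n) auto
  have TA: "(T ^^ n) f \<in> A" if "f \<in> A" for n f
    using that assms(4) by (induction n) (auto simp: T_def)
  have gd: "cmod (f a - f b) \<le> gdist X A a b \<and> gdist X A a b \<le> 2"
    if "f \<in> A" "supn X f \<le> 1" "a \<in> X" "b \<in> X" for f a b
  proof -
    have b2: "cmod (g a - g b) \<le> 2" if "g \<in> A" "supn X g \<le> 1" for g
    proof -
      have "cmod (g a - g b) \<le> cmod (g a) + cmod (g b)" by (rule norm_triangle_ineq4)
      also have "\<dots> \<le> supn X g + supn X g"
        using UA_ge[OF UA that(1)] \<open>a \<in> X\<close> \<open>b \<in> X\<close> by (meson add_mono)
      finally show ?thesis using that by linarith
    qed
    have bd: "bdd_above {cmod (f a - f b) | f. f \<in> A \<and> supn X f \<le> 1}"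
      using b2 by (auto simp: bdd_above_def)
    have "cmod (f a - f b) \<le> gdist X A a b"
      unfolding gdist_def using that by (intro cSup_upper[OF _ bd]) auto
    moreover have "gdist X A a b \<le> 2"
      unfolding gdist_def using b2 constA sup0 by (intro cSup_least) auto
    ultimately show ?thesis by blast
  qed
  define C where "C n = Sup ((\<lambda>x. gdist X A ((\<phi> ^^ n) x) x0) ` X)" for n
  have Cb: "gdist X A ((\<phi> ^^ n) x) x0 \<le> C n" if "x \<in> X" for n x
  proof -
    have "bdd_above ((\<lambda>x. gdist X A ((\<phi> ^^ n) x) x0) ` X)"
      using gd[OF constA sup0 phiX assms(2)] by (auto simp: bdd_above_def)
    then show ?thesis unfolding C_def using that by (intro cSup_upper) auto
  qed
  have key: "0 \<le> ess_norm X A (T ^^ n) \<and> ess_norm X A (T ^^ n) \<le> C n" for n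
  proof -
    define K0 where "K0 = (\<lambda>(f::'a \<Rightarrow> complex) (_::'a). f x0)"
    have K0c: "compact_operator_on X A K0"
      unfolding compact_operator_on_def
    proof (intro conjI ballI allI impI)
      fix F :: "nat \<Rightarrow> 'a \<Rightarrow> complex"
      assume F: "\<forall>n. F n \<in> A \<and> supn X (F n) \<le> 1"
      have "\<forall>n. F n x0 \<in> cball 0 1"
        using F UA_ge[OF UA _ assms(2)] by (meson mem_cball_0 order_trans)
      then obtain l r where r: "strict_mono (r::nat\<Rightarrow>nat)" "((\<lambda>n. F n x0) \<circ> r) \<longlonglongrightarrow> l"
        using seq_compactE[OF compact_imp_seq_compact[OF compact_cball]] by metis
      have "Cauchy ((\<lambda>n. F n x0) \<circ> r)" using r(2) by (rule LIMSEQ_imp_Cauchy)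
      then have "uniformly_Cauchy_on X (\<lambda>n. K0 (F (r n)))"
        unfolding uniformly_Cauchy_on_def Cauchy_def K0_def by simp
      then show "\<exists>r::nat\<Rightarrow>nat. strict_mono r \<and> uniformly_Cauchy_on X (\<lambda>n. K0 (F (r n)))"
        using r(1) by blast
    qed (auto simp: K0_def constA assms(2))
    define S where "S K = opnorm X A (\<lambda>f x. (T ^^ n) f x - K f x)" for K
    have Sge: "0 \<le> S K" if K: "compact_operator_on X A K" for K
    proof -
      obtain M where M: "\<forall>f\<in>A. supn X f \<le> 1 \<longrightarrow> supn X (K f) \<le> M"
        using compact_op_bdd[OF UA ne K] by blast
      have KA: "K f \<in> A" if "f \<in> A" for f using K that unfolding compact_operator_on_def by blast
      have pw: "cmod ((T ^^ n) f x - K f x) \<le> 1 + M" if "f \<in> A" "supn X f \<le> 1" "x \<in> X" for f x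
      proof -
        have "cmod ((T ^^ n) f x - K f x) \<le> cmod ((T ^^ n) f x) + cmod (K f x)"
          by (rule norm_triangle_ineq4)
        moreover have "cmod ((T ^^ n) f x) \<le> 1"
          using UA_ge[OF UA that(1) phiX[OF that(3), of n]] that(2) by (simp add: Tpow)
        moreover have "cmod (K f x) \<le> M"
          using UA_ge[OF UA KA[OF that(1)] that(3)] M that by fastforce
        ultimately show ?thesis by linarith
      qed
      have bdP: "bdd_above {supn X (\<lambda>x. (T ^^ n) f x - K f x) | f. f \<in> A \<and> supn X f \<le> 1}"
      proof (rule bdd_aboveI[where M="1 + M"])
        fix y assume "y \<in> {supn X (\<lambda>x. (T ^^ n) f x - K f x) | f. f \<in> A \<and> supn X f \<le> 1}"
        then obtain f where f: "f \<in> A" "supn X f \<le> 1" "y = supn X (\<lambda>x. (T ^^ n) f x - K f x)" by blast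
        have "supn X (\<lambda>x. (T ^^ n) f x - K f x) \<le> 1 + M"
          by (rule supn_le[OF ne]) (rule pw[OF f(1,2)])
        then show "y \<le> 1 + M" using f(3) by simp
      qed
      have "0 \<le> supn X (\<lambda>x. (T ^^ n) (\<lambda>_. 0) x - K (\<lambda>_. 0) x)"
        apply (rule order_trans[OF norm_ge_zero supn_ge[OF assms(2)]])
        using pw[OF constA sup0] by (auto simp: bdd_above_def)
      also have "\<dots> \<le> S K"
        unfolding S_def opnorm_def using constA sup0 by (intro cSup_upper[OF _ bdP]) auto
      finally show ?thesis .
    qed
    have SK0: "S K0 \<le> C n"
      unfolding S_def opnorm_def
    proof (rule cSup_least)
      show "{supn X (\<lambda>x. (T ^^ n) f x - K0 f x) | f. f \<in> A \<and> supn X f \<le> 1} \<noteq> {}"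
        using constA sup0 by blast
    next
      fix y assume "y \<in> {supn X (\<lambda>x. (T ^^ n) f x - K0 f x) | f. f \<in> A \<and> supn X f \<le> 1}"
      then obtain f where f: "f \<in> A" "supn X f \<le> 1" "y = supn X (\<lambda>x. (T ^^ n) f x - K0 f x)" by blast
      have "supn X (\<lambda>x. (T ^^ n) f x - K0 f x) \<le> C n"
      proof (rule supn_le[OF ne])
        fix x assume x: "x \<in> X"
        have "cmod (f ((\<phi> ^^ n) x) - f x0) \<le> gdist X A ((\<phi> ^^ n) x) x0"
          using gd[OF f(1,2) phiX[OF x] assms(2)] by blast
        also have "\<dots> \<le> C n" using Cb[OF x] .
        finally show "cmod ((T ^^ n) f x - K0 f x) \<le> C n" by (simp add: Tpow K0_def)
      qed
      then show "y \<le> C n" using f by simp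
    qed
    have eq: "ess_norm X A (T ^^ n) = Inf {S K | K. compact_operator_on X A K}"
      unfolding ess_norm_def S_def by simp
    have bb: "bdd_below {S K | K. compact_operator_on X A K}"
      using Sge by (auto simp: bdd_below_def)
    have "Inf {S K | K. compact_operator_on X A K} \<le> S K0"
      using K0c by (intro cInf_lower[OF _ bb]) auto
    moreover have "0 \<le> Inf {S K | K. compact_operator_on X A K}"
      using K0c Sge by (intro cInf_greatest) auto
    ultimately show ?thesis using SK0 eq by simp
  qed
  have lim: "(\<lambda>n. C n powr (1 / real n)) \<longlonglongrightarrow> 0" using assms(5) unfolding C_def .
  show ?thesis
    unfolding riesz_op_def T_def[symmetric]
  proof (rule tendsto_sandwich[OF _ _ tendsto_const lim])
    show "\<forall>\<^sub>F n in sequentially. 0 \<le> ess_norm X A (T ^^ n) powr (1 / real n)" by simp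
    show "\<forall>\<^sub>F n in sequentially. ess_norm X A (T ^^ n) powr (1 / real n) \<le> C n powr (1 / real n)"
      using key by (intro always_eventually allI powr_mono2) auto
  qed
qed

end
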